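(* Let $q$ be a power of an odd prime $p$, let $a,b$ be distinct positive integers and $n$ a positive integer. The $\mathbb{F}_q$-dimension of the radical of the quadratic form $x\mapsto \mathrm{Tr}_{\mathbb{F}_{q^n}/\mathbb{F}_q}(x^{q^b+1}-x^{q^a+1})$ on $\mathbb{F}_{q^n}$ equals $$\begin{cases}(b+a,n)+(|b-a|,n)-(b+a,|b-a|,n) & \text{if } \nu_p(n)\le \max\{\nu_p(b+a),\nu_p(|b-a|)\},\\ (b+a,n)+(|b-a|,n) & \text{if } \nu_p(n)> \max\{\nu_p(b+a),\nu_p(|b-a|)\}.\end{cases}$$
   Context: $(u,v)$ and $(u,v,w)$ denote greatest common divisors; $\nu_p$ is the $p$-adic valuation. The radical of a quadratic form $F$ over $\mathbb{F}_q$ on $\mathbb{F}_{q^n}$ is $\{x\in\mathbb{F}_{q^n}: F(x+y)-F(x)-F(y)=0\ \forall y\in\mathbb{F}_{q^n}\}$. *)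

theory Defs
  imports "HOL-Algebra.Algebraic_Closure_Type" "HOL-Algebra.Embedded_Algebras"
    "HOL-Computational_Algebra.Primes"
begin

definition subfield_Fq :: "nat \<Rightarrow> 'a::field set" where
  "subfield_Fq q = {x. x ^ q = x}"

definition trace_Fq :: "nat \<Rightarrow> nat \<Rightarrow> 'a::field \<Rightarrow> 'a" where
  "trace_Fq q n x = (\<Sum>i<n. x ^ (q ^ i))"

definition qf_radical :: "('a::field \<Rightarrow> 'a) \<Rightarrow> 'a set" where
  "qf_radical F = {x. \<forall>y. F (x + y) - F x - F y = 0}"

end

theory Submission
  imports Defs
begin


lemma power_card_same:
  fixes x :: "'a :: {finite,field}"
  shows   "x ^ card (UNIV :: 'a set) = x"
proof (cases "x = 0")
  case False
  have "x * (\<Prod>y\<in>UNIV-{0}. x * y) = x * x ^ (card (UNIV :: 'a set) - 1) * \<Prod>(UNIV-{0})"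
    by (simp add: prod.distrib mult_ac)
  also have "x * x ^ (card (UNIV :: 'a set) - 1) = x ^ Suc (card (UNIV :: 'a set) - 1)"
    by (subst power_Suc) auto
  also have "Suc (card (UNIV :: 'a set) - 1) = card (UNIV :: 'a set)"
    using finite_UNIV_card_ge_0[where ?'a = 'a] by simp
  also have "(\<Prod>y\<in>UNIV-{0}. x * y) = (\<Prod>y\<in>UNIV-{0}. y)"
    by (rule prod.reindex_bij_witness[of _ "\<lambda>y. y / x" "\<lambda>y. x * y"]) (use False in auto)
  finally show ?thesis
    by simp
qed (use finite_UNIV_card_ge_0[where ?'a = 'a] in auto)

lemma of_nat_card_zero:
  "of_nat (card (UNIV :: 'a :: {finite,ring_1} set)) = (0::'a)"
proof -
  have "(\<Sum>y\<in>(UNIV::'a set). y + 1) = (\<Sum>y\<in>UNIV. y)"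
    by (rule sum.reindex_bij_witness[of _ "\<lambda>y. y - 1" "\<lambda>y. y + 1"]) auto
  hence "(\<Sum>y\<in>(UNIV::'a set). y) + of_nat (card (UNIV :: 'a set)) = (\<Sum>y\<in>UNIV. y)"
    by (simp add: sum.distrib)
  thus ?thesis by simp
qed

lemma card_hom:
  fixes f :: "'a::ab_group_add \<Rightarrow> 'b::ab_group_add"
  assumes fin: "finite A" and add: "\<And>x y. x \<in> A \<Longrightarrow> y \<in> A \<Longrightarrow> f (x - y) = f x - f y"
    and cl: "\<And>x y. x \<in> A \<Longrightarrow> y \<in> A \<Longrightarrow> x - y \<in> A"
    and cl2: "\<And>x y. x \<in> A \<Longrightarrow> y \<in> A \<Longrightarrow> x + y \<in> A"
  shows "card A = card {x\<in>A. f x = 0} * card (f ` A)"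
proof -
  have A: "A = (\<Union>y\<in>f ` A. {x\<in>A. f x = y})" by auto
  have "card A = (\<Sum>y\<in>f ` A. card {x\<in>A. f x = y})"
    by (subst A, rule card_UN_disjoint) (use fin in auto)
  also have "\<dots> = (\<Sum>y\<in>f ` A. card {x\<in>A. f x = 0})"
  proof (rule sum.cong[OF refl])
    fix y assume "y \<in> f ` A"
    then obtain x0 where x0: "x0 \<in> A" "f x0 = y" by auto
    have "{x\<in>A. f x = y} = (\<lambda>z. z + x0) ` {x\<in>A. f x = 0}"
    proof
      show "{x\<in>A. f x = y} \<subseteq> (\<lambda>z. z + x0) ` {x\<in>A. f x = 0}"
      proof
        fix x assume x: "x \<in> {x\<in>A. f x = y}"
        hence "x - x0 \<in> {x\<in>A. f x = 0}" using add[of x x0] cl[of x x0] x0 by auto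
        thus "x \<in> (\<lambda>z. z + x0) ` {x\<in>A. f x = 0}" by (intro image_eqI[of _ _ "x - x0"]) auto
      qed
    next
      show "(\<lambda>z. z + x0) ` {x\<in>A. f x = 0} \<subseteq> {x\<in>A. f x = y}"
      proof
        fix x assume "x \<in> (\<lambda>z. z + x0) ` {x\<in>A. f x = 0}"
        then obtain z where z: "z \<in> A" "f z = 0" "x = z + x0" by auto
        have "f z = f x - f x0" using add[of x x0] z cl2[of z x0] x0 by simp
        thus "x \<in> {x\<in>A. f x = y}" using z x0 cl2 by auto
      qed
    qed
    also have "card \<dots> = card {x\<in>A. f x = 0}"
      by (rule card_image) (auto simp: inj_on_def)
    finally show "card {x\<in>A. f x = y} = card {x\<in>A. f x = 0}" .
  qed
  also have "\<dots> = card {x\<in>A. f x = 0} * card (f ` A)" by simp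
  finally show ?thesis .
qed



lemma roots_sum_bound:
  fixes E :: "nat \<Rightarrow> nat" and q m B :: nat
  assumes q: "q \<ge> 2" and m: "m > 0" and E0: "E 0 = 0"
    and Enz: "\<And>i. i < m \<Longrightarrow> i \<noteq> 0 \<Longrightarrow> E i \<noteq> 0"
    and EB: "\<And>i. i < m \<Longrightarrow> E i \<le> B"
  shows "card {x::'a::idom. (\<Sum>i<m. x ^ (q ^ E i)) = 0} \<le> q ^ B"
proof -
  define P :: "'a poly" where "P = (\<Sum>i<m. monom 1 (q ^ E i))"
  have ev: "poly P x = (\<Sum>i<m. x ^ (q ^ E i))" for x
    by (simp add: P_def poly_sum poly_monom)
  have qE: "q ^ E i = 1 \<longleftrightarrow> i = 0" if "i < m" for i
    using q E0 Enz[OF that] by (cases "i = 0") auto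
  have "coeff P 1 = (\<Sum>i<m. if i = 0 then 1 else 0)"
    unfolding P_def coeff_sum coeff_monom
    by (rule sum.cong[OF refl]) (use qE in auto)
  also have "\<dots> = 1" using m by simp
  finally have "P \<noteq> 0" by auto
  have "degree P \<le> q ^ B"
    unfolding P_def
  proof (rule degree_sum_le)
    fix i assume "i \<in> {..<m}"
    hence "E i \<le> B" using EB by auto
    hence "q ^ E i \<le> q ^ B" using q by (intro power_increasing) auto
    thus "degree (monom (1::'a) (q ^ E i)) \<le> q ^ B" by (simp add: degree_monom_eq)
  qed simp
  have "card {x::'a. (\<Sum>i<m. x ^ (q ^ E i)) = 0} = card {x. poly P x = 0}"
    by (simp add: ev)
  also have "\<dots> \<le> degree P" by (rule card_poly_roots_bound) fact
  finally show ?thesis using \<open>degree P \<le> q ^ B\<close> by linarith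
qed

lemma roots_fix_bound:
  fixes Q :: nat
  assumes "Q \<ge> 2"
  shows "card {x::'a::idom. x ^ Q = x} \<le> Q"
proof -
  define P :: "'a poly" where "P = monom 1 Q - [:0, 1:]"
  have ev: "poly P x = x ^ Q - x" for x by (simp add: P_def poly_monom)
  obtain k where k: "Q = Suc (Suc k)" using assms by (metis add_2_eq_Suc le_Suc_ex)
  have "coeff P Q = 1" using k by (simp add: P_def coeff_monom)
  hence "P \<noteq> 0" by auto
  have "degree P \<le> Q" unfolding P_def
    by (rule degree_diff_le) (use assms in \<open>auto simp: degree_monom_eq\<close>)
  have "card {x::'a. x ^ Q = x} = card {x. poly P x = 0}" by (simp add: ev)
  also have "\<dots> \<le> degree P" by (rule card_poly_roots_bound) fact
  finally show ?thesis using \<open>degree P \<le> Q\<close> by linarith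
qed



locale ffq =
  fixes p k q n :: nat and ty :: "'F::{finite,field} itself"
  assumes p: "prime p" and k: "k \<ge> 1" and q: "q = p ^ k"
    and cardF: "card (UNIV::'F set) = q ^ n" and n: "n > 0"
begin

lemma q2: "q \<ge> 2"
proof -
  have "p \<ge> 2" using p prime_ge_2_nat by blast
  hence "p ^ 1 \<le> p ^ k" using k by (intro power_increasing) auto
  thus ?thesis using \<open>p \<ge> 2\<close> q by simp
qed

lemma charF: "CHAR('F) = p"
proof -
  have "of_nat (card (UNIV::'F set)) = (0::'F)" by (rule of_nat_card_zero)
  hence "of_nat (p ^ (k * n)) = (0::'F)" using cardF q by (simp add: power_mult)
  hence dv: "CHAR('F) dvd p ^ (k * n)" by (simp only: of_nat_eq_0_iff_char_dvd)
  have "CHAR('F) > 0" by (rule finite_imp_CHAR_pos) simp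
  hence pc: "prime CHAR('F)" by (rule prime_CHAR_semidom)
  hence "CHAR('F) dvd p" using dv prime_dvd_power by blast
  thus ?thesis using pc p by (simp add: primes_dvd_imp_eq)
qed

lemma primeC: "prime CHAR('F)" using charF p by simp

lemma frob_add: "((x::'F) + y) ^ (q ^ j) = x ^ (q ^ j) + y ^ (q ^ j)"
  by (rule freshmans_dream'[OF primeC, of _ "k * j"]) (simp add: charF q power_mult)

lemma frob_sum: "(sum (f :: 'b \<Rightarrow> 'F) A) ^ (q ^ j) = sum (\<lambda>i. f i ^ (q ^ j)) A"
  by (rule freshmans_dream_sum'[OF primeC, of _ "k * j"]) (simp add: charF q power_mult)

lemma frob_minus: "(- (x::'F)) ^ (q ^ j) = - (x ^ (q ^ j))"
proof -
  have "(- x + x) ^ (q ^ j) = 0" using q2 by simp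
  thus ?thesis unfolding frob_add by (simp add: eq_neg_iff_add_eq_0)
qed

lemma frob_diff: "((x::'F) - y) ^ (q ^ j) = x ^ (q ^ j) - y ^ (q ^ j)"
  using frob_add[of x "- y" j] frob_minus[of y j] by simp

lemma pw_pw: "((x::'F) ^ (q ^ i)) ^ (q ^ j) = x ^ (q ^ (i + j))"
  by (simp add: power_mult[symmetric] power_add)

lemma pw_n: "(x::'F) ^ (q ^ n) = x"
  using power_card_same[of x] cardF by simp

lemma pw_nt: "(x::'F) ^ (q ^ (n * t + j)) = x ^ (q ^ j)"
proof (induction t)
  case 0 thus ?case by simp
next
  case (Suc t)
  have "x ^ (q ^ (n * Suc t + j)) = (x ^ (q ^ n)) ^ (q ^ (n * t + j))"
    by (simp add: pw_pw algebra_simps)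
  thus ?case using Suc pw_n by simp
qed

definition Fix :: "nat \<Rightarrow> 'F set" where "Fix j = {x. x ^ (q ^ j) = x}"

lemma Fix_iff: "x \<in> Fix j \<longleftrightarrow> x ^ (q ^ j) = x" by (simp add: Fix_def)

lemma Fix_mult: "x \<in> Fix a \<Longrightarrow> x \<in> Fix (a * t)"
proof (induction t)
  case 0 thus ?case by (simp add: Fix_iff)
next
  case (Suc t)
  have "x ^ (q ^ (a * Suc t)) = (x ^ (q ^ a)) ^ (q ^ (a * t))" by (simp add: pw_pw algebra_simps)
  thus ?case using Suc by (simp add: Fix_iff)
qed

lemma Fix_dvd: "c dvd a \<Longrightarrow> x \<in> Fix c \<Longrightarrow> x \<in> Fix a"
  using Fix_mult by (auto elim!: dvdE)

lemma Fix_gcd: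
  assumes "x \<in> Fix a" "x \<in> Fix b" "a > 0"
  shows "x \<in> Fix (gcd a b)"
proof -
  obtain u v where uv: "a * u = b * v + gcd a b" using bezout_nat[of a b] assms(3) by auto
  have "x = x ^ (q ^ (a * u))" using Fix_mult[OF assms(1)] by (simp add: Fix_iff)
  also have "\<dots> = (x ^ (q ^ (b * v))) ^ (q ^ gcd a b)" by (simp add: uv pw_pw)
  also have "\<dots> = x ^ (q ^ gcd a b)" using Fix_mult[OF assms(2)] by (simp add: Fix_iff)
  finally show ?thesis by (simp add: Fix_iff)
qed

lemma Fix_n: "Fix n = UNIV" by (auto simp: Fix_iff pw_n)

lemma Fix_gcd_n: "Fix j = Fix (gcd j n)"
proof
  show "Fix j \<subseteq> Fix (gcd j n)"
  proof
    fix x assume x: "x \<in> Fix j"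
    show "x \<in> Fix (gcd j n)"
    proof (cases "j = 0")
      case True thus ?thesis using Fix_n by simp
    next
      case False thus ?thesis using Fix_gcd[OF x, of n] Fix_n by auto
    qed
  qed
next
  show "Fix (gcd j n) \<subseteq> Fix j" using Fix_dvd by auto
qed

definition D :: "nat \<Rightarrow> 'F \<Rightarrow> 'F" where "D j x = x ^ (q ^ j) - x"

definition T :: "nat \<Rightarrow> 'F \<Rightarrow> 'F" where "T g x = (\<Sum>i< n div g. x ^ (q ^ (g * i)))"

lemma D_diff: "D j (x - y) = D j x - D j y" by (simp add: D_def frob_diff)
lemma T_diff: "T g (x - y) = T g x - T g y" by (simp add: T_def frob_diff sum_subtractf)

lemma T_shift:
  assumes "g dvd n" "g > 0"
  shows "T g (x ^ (q ^ g)) = T g x"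
proof -
  define m where "m = n div g"
  have nm: "n = g * m" using assms m_def by simp
  define f where "f i = x ^ (q ^ (g * i))" for i
  have "T g (x ^ (q ^ g)) = (\<Sum>i<m. f (Suc i))"
    by (simp add: T_def m_def f_def pw_pw algebra_simps)
  also have "\<dots> = (\<Sum>i<Suc m. f i) - f 0" by (subst sum.lessThan_Suc_shift) simp
  also have "\<dots> = (\<Sum>i<m. f i) + f m - f 0" by simp
  also have "f m = f 0" using pw_n by (simp add: f_def nm[symmetric])
  finally show ?thesis by (simp add: T_def m_def f_def)
qed

lemma T_shift_mult:
  assumes "g dvd n" "g > 0"
  shows "T g (x ^ (q ^ (g * t))) = T g x"
proof (induction t)
  case 0 thus ?case by simp
next
  case (Suc t)
  have "x ^ (q ^ (g * Suc t)) = (x ^ (q ^ (g * t))) ^ (q ^ g)" by (simp add: pw_pw algebra_simps)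
  thus ?case using Suc T_shift[OF assms] by simp
qed

lemma T_D:
  assumes "g dvd n" "g > 0" "g dvd d"
  shows "T g (D d x) = 0"
proof -
  obtain t where "d = g * t" using assms(3) by auto
  thus ?thesis using T_shift_mult[OF assms(1,2)] by (simp add: D_def T_diff)
qed

lemma card_T_ker:
  assumes "g dvd n" "g > 0"
  shows "card {x::'F. T g x = 0} \<le> q ^ (n - g)"
proof -
  define m where "m = n div g"
  have nm: "n = g * m" using assms m_def by simp
  have m0: "m > 0" using n nm by (cases m) auto
  have "card {x::'F. (\<Sum>i<m. x ^ (q ^ (g * i))) = 0} \<le> q ^ (g * (m - 1))"
    by (rule roots_sum_bound) (use q2 m0 assms(2) in \<open>auto intro: mult_le_mono\<close>)
  moreover have "g * (m - 1) = n - g" using nm by (simp add: algebra_simps)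
  ultimately show ?thesis by (simp add: T_def m_def)
qed

lemma card_UNIV_D:
  "card (UNIV::'F set) = card (Fix j) * card (range (D j))"
proof -
  have "card (UNIV::'F set) = card {x\<in>UNIV. D j x = 0} * card (D j ` UNIV)"
    by (rule card_hom) (auto simp: D_diff)
  moreover have "{x\<in>UNIV. D j x = 0} = Fix j" by (auto simp: D_def Fix_iff)
  ultimately show ?thesis by simp
qed

lemma card_Fix_dvd:
  assumes "g dvd n" "g > 0"
  shows "card (Fix g) = q ^ g"
proof (rule antisym)
  have "q ^ g \<ge> 2"
  proof -
    have "q ^ 1 \<le> q ^ g" using q2 assms(2) by (intro power_increasing) auto
    thus ?thesis using q2 by simp
  qed
  thus "card (Fix g) \<le> q ^ g" unfolding Fix_def by (rule roots_fix_bound)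
next
  have "range (D g) \<subseteq> {x. T g x = 0}" using T_D[OF assms] by auto
  hence "card (range (D g)) \<le> card {x::'F. T g x = 0}" by (intro card_mono) auto
  also have "\<dots> \<le> q ^ (n - g)" by (rule card_T_ker[OF assms])
  finally have "q ^ n \<le> card (Fix g) * q ^ (n - g)"
    using card_UNIV_D[of g] cardF by (metis mult_le_mono2)
  moreover have "q ^ n = q ^ g * q ^ (n - g)"
    using dvd_imp_le[OF assms(1) n] by (simp add: power_add[symmetric])
  ultimately show "q ^ g \<le> card (Fix g)" using q2 by simp
qed

lemma card_Fix: "card (Fix j) = q ^ gcd j n"
  using card_Fix_dvd[of "gcd j n"] n Fix_gcd_n[of j] by simp

lemma range_D:
  assumes "d > 0"
  shows "range (D d) = {x. T (gcd d n) x = 0}"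
proof -
  let ?g = "gcd d n"
  have g: "?g dvd n" "?g > 0" "?g dvd d" using n by auto
  have sub: "range (D d) \<subseteq> {x. T ?g x = 0}" using T_D[OF g] by auto
  have "q ^ n = q ^ ?g * card (range (D d))" using card_UNIV_D[of d] cardF card_Fix by simp
  moreover have "q ^ n = q ^ ?g * q ^ (n - ?g)"
    using dvd_imp_le[OF g(1) n] by (simp add: power_add[symmetric])
  ultimately have "card (range (D d)) = q ^ (n - ?g)" using q2 by simp
  hence "card {x::'F. T ?g x = 0} \<le> card (range (D d))" using card_T_ker[OF g(1,2)] by simp
  thus ?thesis using sub by (intro card_seteq) auto
qed

end

context ffq begin

lemma D_zero[simp]: "D j 0 = 0" using q2 by (simp add: D_def)

lemma Fix_mod:
  assumes "x \<in> Fix h"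
  shows "x ^ (q ^ i) = x ^ (q ^ (i mod h))"
proof -
  have "x ^ (q ^ i) = (x ^ (q ^ (h * (i div h)))) ^ (q ^ (i mod h))"
    by (simp add: pw_pw)
  thus ?thesis using Fix_mult[OF assms] by (simp add: Fix_iff)
qed

lemma Fix_inter:
  assumes "g > 0"
  shows "Fix g \<inter> Fix h = Fix (gcd g h)"
  using Fix_gcd[OF _ _ assms] Fix_dvd[of "gcd g h" g] Fix_dvd[of "gcd g h" h] by auto

lemma Fix_D_closed:
  assumes "x \<in> Fix h" shows "D g x \<in> Fix h"
proof -
  have "(x ^ (q ^ g)) ^ (q ^ h) = (x ^ (q ^ h)) ^ (q ^ g)" by (simp add: pw_pw add.commute)
  thus ?thesis using assms by (simp add: Fix_iff D_def frob_diff)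
qed

lemma card_W:
  assumes g: "g dvd n" "g > 0" and h: "h dvd n" "h > 0"
  defines "W \<equiv> {x \<in> Fix h. T g x = 0}"
  shows "card W = (if p dvd (n div lcm g h) then q ^ h else q ^ (h - gcd g h))"
proof -
  define e where "e = gcd g h"
  define a' where "a' = h div e"
  define c where "c = n div lcm g h"
  have e0: "e > 0" using g by (simp add: e_def)
  have he: "h = e * a'" by (simp add: a'_def e_def)
  have a'0: "a' > 0" using he h by auto
  have lcm: "lcm g h = g * a'" by (simp add: lcm_nat_def a'_def e_def div_mult_swap)
  have nL: "n = c * (g * a')" using lcm_least[OF g(1) h(1)] by (simp add: c_def lcm)
  have ndg: "n div g = c * a'" using nL g by simp
  define U where "U x = (\<Sum>r<a'. x ^ (q ^ (g * r)))" for x :: 'F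
  have TU: "T g x = of_nat c * U x" if x: "x \<in> Fix h" for x
  proof -
    define f where "f i = x ^ (q ^ (g * i))" for i
    have "T g x = sum f {..<c * a'}" by (simp add: T_def ndg f_def)
    also have "\<dots> = (\<Sum>j<c. sum f {j * a'..<j * a' + a'})" by (rule sum.nat_group[symmetric])
    also have "\<dots> = (\<Sum>j<c. U x)"
    proof (rule sum.cong[OF refl])
      fix j
      have "sum f {j * a'..<j * a' + a'} = sum f {0 + j * a'..<a' + j * a'}" by (simp add: add.commute)
      also have "\<dots> = (\<Sum>r = 0..<a'. f (r + j * a'))" by (rule sum.shift_bounds_nat_ivl)
      also have "\<dots> = U x"
        unfolding U_def atLeast0LessThan
      proof (rule sum.cong[OF refl])
        fix r
        have hd: "h dvd g * a' * j" using lcm by (metis dvd_lcm2 dvd_mult2)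
        have "f (r + j * a') = (x ^ (q ^ (g * a' * j))) ^ (q ^ (g * r))"
          by (simp add: f_def pw_pw algebra_simps)
        also have "x ^ (q ^ (g * a' * j)) = x" using Fix_dvd[OF hd x] by (simp add: Fix_iff)
        finally show "f (r + j * a') = x ^ (q ^ (g * r))" .
      qed
      finally show "sum f {j * a'..<j * a' + a'} = U x" .
    qed
    also have "\<dots> = of_nat c * U x" by simp
    finally show ?thesis .
  qed
  have cardK: "card (Fix h) = q ^ h" using card_Fix_dvd[OF h] .
  show ?thesis
  proof (cases "p dvd c")
    case True
    hence "of_nat c = (0::'F)" using charF by (simp add: of_nat_eq_0_iff_char_dvd)
    hence "W = Fix h" using TU by (auto simp: W_def)
    thus ?thesis using True cardK by (simp add: c_def)
  next
    case False
    hence c0: "of_nat c \<noteq> (0::'F)" using charF by (simp add: of_nat_eq_0_iff_char_dvd)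
    hence WU: "W = {x \<in> Fix h. U x = 0}" using TU by (auto simp: W_def)
    define E where "E r = (g * r) mod h" for r
    have "W \<subseteq> {x::'F. (\<Sum>r<a'. x ^ (q ^ E r)) = 0}"
    proof
      fix x assume "x \<in> W"
      hence x: "x \<in> Fix h" "U x = 0" using WU by auto
      have "(\<Sum>r<a'. x ^ (q ^ E r)) = U x"
        unfolding U_def E_def by (rule sum.cong[OF refl]) (simp add: Fix_mod[OF x(1), symmetric])
      thus "x \<in> {x::'F. (\<Sum>r<a'. x ^ (q ^ E r)) = 0}" using x by simp
    qed
    hence "card W \<le> card {x::'F. (\<Sum>r<a'. x ^ (q ^ E r)) = 0}" by (intro card_mono) auto
    also have "\<dots> \<le> q ^ (h - e)"
    proof (rule roots_sum_bound)
      show "2 \<le> q" by (rule q2)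
      show "0 < a'" by (rule a'0)
      show "E 0 = 0" by (simp add: E_def)
    next
      fix r assume r: "r < a'" "r \<noteq> 0"
      show "E r \<noteq> 0"
      proof
        assume "E r = 0"
        hence "h dvd g * r" by (simp add: E_def mod_eq_0_iff_dvd)
        define g' where "g' = g div e"
        have ge: "g = e * g'" by (simp add: g'_def e_def)
        have cop: "coprime a' g'"
          using div_gcd_coprime[of g h] g(2) by (simp add: a'_def g'_def e_def coprime_commute)
        have "e * a' dvd e * (g' * r)" using \<open>h dvd g * r\<close> he ge by (simp add: mult.assoc)
        hence "a' dvd g' * r" using e0 by simp
        hence "a' dvd r" using cop coprime_dvd_mult_right_iff by blast
        thus False using r by (auto dest: dvd_imp_le)
      qed
    next
      fix r assume r: "r < a'"
      have "e dvd E r" unfolding E_def by (rule dvd_mod) (auto simp: e_def)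
      then obtain u where u: "E r = e * u" by auto
      have "E r < h" using h by (simp add: E_def)
      hence "u < a'" using u he e0 by simp
      hence "e * u \<le> e * (a' - 1)" by (intro mult_le_mono2) linarith
      thus "E r \<le> h - e" using u he by (simp add: algebra_simps)
    qed
    finally have up: "card W \<le> q ^ (h - e)" .
    have sub: "D g ` Fix h \<subseteq> W"
      using Fix_D_closed T_D[OF g, of g] by (auto simp: W_def)
    have "card (Fix h) = card {x\<in>Fix h. D g x = 0} * card (D g ` Fix h)"
      by (rule card_hom) (auto simp: D_diff Fix_iff frob_diff frob_add)
    moreover have "{x\<in>Fix h. D g x = 0} = Fix e"
      using Fix_inter[OF g(2), of h] by (auto simp: D_def Fix_iff e_def)
    moreover have "card (Fix e) = q ^ e"
      by (rule card_Fix_dvd) (use e0 g in \<open>auto simp: e_def intro: dvd_trans\<close>)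
    ultimately have "q ^ h = q ^ e * card (D g ` Fix h)" using cardK by simp
    moreover have "q ^ h = q ^ e * q ^ (h - e)" using he a'0
      by (simp add: power_add[symmetric])
    ultimately have "card (D g ` Fix h) = q ^ (h - e)" using q2 by simp
    hence "q ^ (h - e) \<le> card W" using sub by (metis card_mono finite)
    thus ?thesis using up False by (simp add: c_def e_def)
  qed
qed

end

context ffq begin

definition Tr :: "'F \<Rightarrow> 'F" where "Tr z = (\<Sum>i<n. z ^ (q ^ i))"

lemma Tr_T: "Tr = T 1" by (auto simp: Tr_def T_def fun_eq_iff)
lemma Tr_add: "Tr (x + y) = Tr x + Tr y" by (simp add: Tr_def frob_add sum.distrib)
lemma Tr_diff: "Tr (x - y) = Tr x - Tr y" by (simp add: Tr_def frob_diff sum_subtractf)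
lemma Tr_zero[simp]: "Tr 0 = 0" using Tr_diff[of 0 0] by simp
lemma Tr_frob: "Tr (z ^ (q ^ j)) = Tr z"
  using T_shift_mult[of 1 z j] n by (simp add: Tr_T)

lemma Tr_nonzero: "\<exists>w. Tr w \<noteq> 0"
proof (rule ccontr)
  assume "\<not> (\<exists>w. Tr w \<noteq> 0)"
  hence "{x::'F. T 1 x = 0} = UNIV" by (auto simp: Tr_T)
  hence "q ^ n \<le> q ^ (n - 1)" using card_T_ker[of 1] n cardF by simp
  moreover have "q ^ (n - 1) < q ^ n" using q2 n by (intro power_strict_increasing) auto
  ultimately show False by simp
qed

lemma Tr_nondeg: "(\<forall>y. Tr (y * z) = 0) \<longleftrightarrow> z = 0"
proof
  assume H: "\<forall>y. Tr (y * z) = 0"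
  show "z = 0"
  proof (rule ccontr)
    assume "z \<noteq> 0"
    obtain w where "Tr w \<noteq> 0" using Tr_nonzero by auto
    moreover have "Tr ((w / z) * z) = 0" using H by blast
    ultimately show False using \<open>z \<noteq> 0\<close> by simp
  qed
qed simp

definition L :: "nat \<Rightarrow> nat \<Rightarrow> 'F \<Rightarrow> 'F" where
  "L a b x = x ^ (q ^ b) + x ^ (q ^ (n * b - b)) - x ^ (q ^ a) - x ^ (q ^ (n * a - a))"

lemma Tr_swap:
  assumes "b > 0"
  shows "Tr (y ^ (q ^ b) * x) = Tr (y * x ^ (q ^ (n * b - b)))"
proof -
  have "(y * x ^ (q ^ (n * b - b))) ^ (q ^ b) = y ^ (q ^ b) * x ^ (q ^ (n * b - b + b))"
    by (simp add: power_mult_distrib pw_pw)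
  also have "n * b - b + b = n * b + 0" using n assms by (cases n) auto 
  also have "x ^ (q ^ (n * b + 0)) = x" using pw_nt[of x b 0] by simp
  finally show ?thesis using Tr_frob[of "y * x ^ (q ^ (n * b - b))" b] by simp
qed

lemma bilin:
  assumes "a > 0" "b > 0"
  defines "Qf \<equiv> (\<lambda>x. Tr (x ^ (q ^ b + 1) - x ^ (q ^ a + 1)))"
  shows "Qf (x + y) - Qf x - Qf y = Tr (y * L a b x)"
proof -
  have e1: "(x + y) ^ (q ^ j + 1) = (x ^ (q ^ j) + y ^ (q ^ j)) * (x + y)" for j
    by (simp add: frob_add[symmetric])
  have "Qf (x + y) - Qf x - Qf y =
        Tr ((x + y) ^ (q ^ b + 1) - (x + y) ^ (q ^ a + 1) - (x ^ (q ^ b + 1) - x ^ (q ^ a + 1))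
            - (y ^ (q ^ b + 1) - y ^ (q ^ a + 1)))"
    by (simp add: Qf_def Tr_diff)
  also have "(x + y) ^ (q ^ b + 1) - (x + y) ^ (q ^ a + 1) - (x ^ (q ^ b + 1) - x ^ (q ^ a + 1))
            - (y ^ (q ^ b + 1) - y ^ (q ^ a + 1))
        = (y * x ^ (q ^ b) - y * x ^ (q ^ a)) + (y ^ (q ^ b) * x - y ^ (q ^ a) * x)"
    unfolding e1 by (simp add: algebra_simps)
  also have "Tr \<dots> = Tr (y * x ^ (q ^ b) - y * x ^ (q ^ a)) + (Tr (y ^ (q ^ b) * x) - Tr (y ^ (q ^ a) * x))"
    by (simp add: Tr_add Tr_diff)
  also have "\<dots> = Tr (y * L a b x)"
    unfolding Tr_swap[OF assms(1)] Tr_swap[OF assms(2)] L_def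
    by (simp add: Tr_add Tr_diff algebra_simps)
  finally show ?thesis .
qed

lemma radical_L:
  assumes "a > 0" "b > 0"
  shows "qf_radical (\<lambda>x::'F. trace_Fq q n (x ^ (q ^ b + 1) - x ^ (q ^ a + 1))) = {x. L a b x = 0}"
proof -
  have tr: "trace_Fq q n = Tr" by (auto simp: fun_eq_iff trace_Fq_def Tr_def)
  show ?thesis
    unfolding qf_radical_def tr using bilin[OF assms] Tr_nondeg by auto
qed

lemma L_D:
  assumes "0 < a" "a < b"
  shows "L a b x = 0 \<longleftrightarrow> D (b + a) (D (b - a) x) = 0"
proof -
  let ?c = "n * b - b"
  have nb: "n * b \<ge> b" using n by (cases n) auto
  have na: "n * a \<ge> a" using n by (cases n) auto
  have "(D (b + a) (D (b - a) x)) ^ (q ^ ?c) =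
        x ^ (q ^ (b - a + (b + a) + ?c)) - x ^ (q ^ (b + a + ?c)) - x ^ (q ^ (b - a + ?c)) + x ^ (q ^ ?c)"
    by (simp add: D_def frob_diff frob_add pw_pw)
  also have "b - a + (b + a) + ?c = n * b + b" using nb assms by simp
  also have "b + a + ?c = n * b + a" using nb by simp
  also have "b - a + ?c = n * (b - a) + (n * a - a)" using nb na assms
    by (simp add: diff_mult_distrib2)
  finally have "(D (b + a) (D (b - a) x)) ^ (q ^ ?c) = L a b x"
    by (simp add: pw_nt L_def)
  moreover have "q ^ ?c > 0" using q2 by simp
  ultimately show ?thesis by (metis power_eq_0_iff zero_power)
qed

lemma L_swap: "L a b x = - L b a x" by (simp add: L_def)

end


lemma nt_aux:
  fixes p x n :: nat
  assumes p: "prime p" and x: "x > 0" and n: "n > 0"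
  shows "p * gcd x n dvd n \<longleftrightarrow> multiplicity p x < multiplicity p n"
proof -
  define G where "G = gcd x n"
  have p1: "p \<noteq> Suc 0" using p by auto
  have G0: "G > 0" using x by (simp add: G_def)
  obtain t where nt: "n = G * t" by (metis G_def gcd_dvd2 dvdE)
  have t0: "t > 0" using nt n by (cases t) auto
  have mn: "multiplicity p n = multiplicity p G + multiplicity p t"
    using nt G0 t0 p by (simp add: prime_elem_multiplicity_mult_distrib)
  have mG: "multiplicity p G \<le> multiplicity p x"
    using x by (intro dvd_imp_multiplicity_le) (auto simp: G_def)
  have "p * G dvd n \<longleftrightarrow> p dvd t" using G0 nt by (simp add: mult.commute[of p])
  moreover have "p dvd t \<longleftrightarrow> multiplicity p x < multiplicity p n"
  proof
    assume pt: "p dvd t"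
    have "multiplicity p t \<ge> 1"
    proof -
      have "p \<noteq> Suc 0" using p by auto
      thus ?thesis using pt t0 p power_dvd_iff_le_multiplicity[of t p 1] by simp
    qed
    show "multiplicity p x < multiplicity p n"
    proof (rule ccontr)
      assume "\<not> ?thesis"
      hence "multiplicity p n \<le> multiplicity p x" by simp
      hence "p ^ multiplicity p n dvd x"
        using power_dvd_iff_le_multiplicity[of x p] x p using p1 by simp
      moreover have "p ^ multiplicity p n dvd n" by (rule multiplicity_dvd)
      ultimately have "p ^ multiplicity p n dvd G" by (simp add: G_def)
      hence "multiplicity p n \<le> multiplicity p G"
        using power_dvd_iff_le_multiplicity[of G p] G0 p using p1 by simp
      thus False using mn \<open>multiplicity p t \<ge> 1\<close> by simp
    qed
  next
    assume lt: "multiplicity p x < multiplicity p n"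
    show "p dvd t"
    proof (rule ccontr)
      assume "\<not> p dvd t"
      hence "multiplicity p t = 0" by (rule not_dvd_imp_multiplicity_0)
      thus False using mn mG lt by simp
    qed
  qed
  ultimately show ?thesis by (simp add: G_def)
qed

lemma nt_main:
  fixes p n d s :: nat
  assumes p: "prime p" and n: "n > 0" and d: "d > 0" and s: "s > 0"
  shows "p dvd (n div lcm (gcd d n) (gcd s n)) \<longleftrightarrow>
         \<not> (multiplicity p n \<le> max (multiplicity p s) (multiplicity p d))"
proof -
  define L where "L = lcm (gcd d n) (gcd s n)"
  have Ln: "L dvd n" by (simp add: L_def)
  have L0: "L > 0" using n d by (simp add: L_def lcm_pos_nat)
  have "p dvd (n div L) \<longleftrightarrow> p * L dvd n"
  proof -
    have "n = (n div L) * L" using Ln by simp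
    hence "p * L dvd n \<longleftrightarrow> p * L dvd (n div L) * L" by simp
    also have "\<dots> \<longleftrightarrow> p dvd (n div L)" using L0 by simp
    finally show ?thesis by simp
  qed
  also have "p * L = lcm (p * gcd d n) (p * gcd s n)" by (simp add: L_def lcm_mult_left)
  also have "lcm (p * gcd d n) (p * gcd s n) dvd n \<longleftrightarrow> p * gcd d n dvd n \<and> p * gcd s n dvd n"
    by (rule lcm_least_iff)
  also have "\<dots> \<longleftrightarrow> multiplicity p d < multiplicity p n \<and> multiplicity p s < multiplicity p n"
    using nt_aux[OF p d n] nt_aux[OF p s n] by simp
  finally show ?thesis by (auto simp: L_def)
qed


lemma dim_card:
  fixes K E :: "'F::{finite,field} set" and Q N :: nat
  assumes K0: "0 \<in> K" "1 \<in> K" and Kd: "\<And>k k'. k \<in> K \<Longrightarrow> k' \<in> K \<Longrightarrow> k - k' \<in> K"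
    and Ki: "\<And>k. k \<in> K \<Longrightarrow> inverse k \<in> K" and Km: "\<And>k k'. k \<in> K \<Longrightarrow> k' \<in> K \<Longrightarrow> k * k' \<in> K" and cK: "card K = Q" and Q: "Q \<ge> 2"
    and E0: "0 \<in> E" and Ea: "\<And>x y. x \<in> E \<Longrightarrow> y \<in> E \<Longrightarrow> x + y \<in> E"
    and Es: "\<And>k x. k \<in> K \<Longrightarrow> x \<in> E \<Longrightarrow> k * x \<in> E"
    and cE: "card E = Q ^ N"
  shows "ring.dimension (ring_of_type_algebra :: 'F ring) N K E"
proof -
  let ?R = "ring_of_type_algebra :: 'F ring"
  interpret R: ring ?R by (rule ring_from_type_algebra)
  have le: "R.line_extension K v E' = {k * v + e | k e. k \<in> K \<and> e \<in> E'}" for v E'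
    using R.line_extension_mem_iff[of _ K v E'] by (auto simp: ring_of_type_algebra_def)
  have lm: "k * v + e \<in> R.line_extension K v E'" if "k \<in> K" "e \<in> E'" for k e v E'
    unfolding le using that by blast
  have m1: "-1 \<in> K" using Kd[OF K0] by simp
  have Kp: "k + k' \<in> K" if "k \<in> K" "k' \<in> K" for k k'
    using Kd[OF that(1) Kd[OF K0(1) that(2)]] by simp
  have cardline: "card (R.line_extension K v E') = Q * card E'"
    if v: "v \<notin> E'" and E': "\<forall>x\<in>E'. \<forall>y\<in>E'. x + y \<in> E'" "\<forall>k\<in>K. \<forall>x\<in>E'. k * x \<in> E'"
    for v E'
  proof -
    have "R.line_extension K v E' = (\<lambda>(k, e). k * v + e) ` (K \<times> E')" unfolding le by auto
    moreover have "inj_on (\<lambda>(k, e). k * v + e) (K \<times> E')"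
    proof (rule inj_onI, clarsimp)
      fix k e k' e' assume k: "k \<in> K" "k' \<in> K" and e: "e \<in> E'" "e' \<in> E'" and eq: "k * v + e = k' * v + e'"
      show "k = k' \<and> e = e'"
      proof (cases "k = k'")
        case True thus ?thesis using eq by simp
      next
        case False
        have "(k - k') * v = e' - e" using eq by (simp add: algebra_simps)
        hence "v = inverse (k - k') * (e' + (-1) * e)" using False by (simp add: field_simps)
        moreover have "inverse (k - k') \<in> K" using Ki Kd k by blast
        moreover have "(-1) * e \<in> E'" using E'(2) m1 e by blast
        hence "e' + (-1) * e \<in> E'" using E'(1) e by blast
        ultimately have "v \<in> E'" using E'(2) by auto
        thus ?thesis using v by simp
      qed
    qed
    ultimately show ?thesis using cK by (simp add: card_image card_cartesian_product)
  qed
  have cardD0: "R.dimension m K' E' \<Longrightarrow> K' = K \<Longrightarrow> card E' = Q ^ m \<and>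
     ((\<forall>x\<in>E'. \<forall>y\<in>E'. x + y \<in> E') \<and> (\<forall>k\<in>K. \<forall>x\<in>E'. k * x \<in> E') \<and> 0 \<in> E')" for m K' E'
  proof (induction m K' E' rule: R.dimension.induct)
    case zero_dim thus ?case by (simp add: ring_of_type_algebra_def)
  next
    case (Suc_dim v E' m K')
    hence KK: "K' = K" by simp
    from Suc_dim KK have IH: "card E' = Q ^ m" "\<forall>x\<in>E'. \<forall>y\<in>E'. x + y \<in> E'" "\<forall>k\<in>K. \<forall>x\<in>E'. k * x \<in> E'" "0 \<in> E'"
      by auto
    note Suc_dim = IH Suc_dim(1,2)
    show ?case
    proof -
    have c1: "\<forall>x\<in>R.line_extension K v E'. \<forall>y\<in>R.line_extension K v E'. x + y \<in> R.line_extension K v E'"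
    proof (intro ballI)
      fix x y assume "x \<in> R.line_extension K v E'" "y \<in> R.line_extension K v E'"
      then obtain k e k' e' where kk: "k \<in> K" "e \<in> E'" "k' \<in> K" "e' \<in> E'" "x = k * v + e" "y = k' * v + e'"
        unfolding le by blast
      hence eqn: "x + y = (k + k') * v + (e + e')" by (simp add: algebra_simps)
      have "(k + k') * v + (e + e') \<in> R.line_extension K v E'" using lm[of "k + k'" "e + e'" E' v] Suc_dim Kp kk by auto
      thus "x + y \<in> R.line_extension K v E'" by (simp only: eqn)
    qed
    have c2: "\<forall>c\<in>K. \<forall>x\<in>R.line_extension K v E'. c * x \<in> R.line_extension K v E'"
    proof (intro ballI)
      fix c x assume "c \<in> K" "x \<in> R.line_extension K v E'"
      then obtain k e where kk: "k \<in> K" "e \<in> E'" "x = k * v + e" unfolding le by blast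
      hence eqn: "c * x = (c * k) * v + c * e" by (simp add: algebra_simps)
      have "(c * k) * v + c * e \<in> R.line_extension K v E'" using lm[of "c * k" "c * e" E' v] Suc_dim Km \<open>c \<in> K\<close> kk by auto
      thus "c * x \<in> R.line_extension K v E'" by (simp only: eqn)
    qed
    have c3: "0 \<in> R.line_extension K v E'" using lm[of 0 0 E' v] Suc_dim K0 by auto
    show ?thesis using cardline[of v E'] Suc_dim c1 c2 c3 KK by simp
  qed
  qed
  have cardD: "R.dimension m K E' \<Longrightarrow> card E' = Q ^ m" for m E' using cardD0 by blast
  have sub: "(\<forall>x\<in>E'. \<forall>y\<in>E'. x + y \<in> E') \<and> (\<forall>k\<in>K. \<forall>x\<in>E'. k * x \<in> E') \<and> 0 \<in> E'"
    if "R.dimension m K E'" for m E' using cardD0[OF that refl] by blast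
  have grow: "\<And>E' m. R.dimension m K E' \<Longrightarrow> E' \<subseteq> E \<Longrightarrow> \<exists>N'. R.dimension N' K E"
  proof -
    fix E' m
    show "R.dimension m K E' \<Longrightarrow> E' \<subseteq> E \<Longrightarrow> \<exists>N'. R.dimension N' K E"
    proof (induction "card E - card E'" arbitrary: E' m rule: less_induct)
      case less
      show ?case
      proof (cases "E' = E")
        case True thus ?thesis using less by blast
      next
        case False
        then obtain v where v: "v \<in> E" "v \<notin> E'" using less by blast
        let ?E = "R.line_extension K v E'"
        have dimE: "R.dimension (Suc m) K ?E"
          by (rule R.Suc_dim) (use v less in \<open>auto simp: ring_of_type_algebra_def\<close>)
        have s1: "?E \<subseteq> E"
        proof
          fix x assume "x \<in> ?E"
          then obtain c e where "c \<in> K" "e \<in> E'" "x = c * v + e" unfolding le by blast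
          thus "x \<in> E" using less(3) Ea Es v by auto
        qed
        have "E' \<subseteq> ?E" using lm[of 0 _ E' v] K0 by auto
        moreover have "v \<in> ?E" using lm[of 1 0 E' v] K0 sub[OF less(2)] by auto
        ultimately have "E' \<subset> ?E" using v by blast
        hence "card E' < card ?E" by (intro psubset_card_mono) auto
        moreover have "card ?E \<le> card E" using s1 by (intro card_mono) auto
        ultimately have "card E - card ?E < card E - card E'" by linarith
        thus ?thesis using less(1) dimE s1 by blast
      qed
    qed
  qed
  obtain N' where N': "R.dimension N' K E"
    using grow[of 0 "{0}"] E0 R.zero_dim[of K] by (auto simp: ring_of_type_algebra_def)
  have "Q ^ N' = Q ^ N" using cardD[OF N'] cE by simp
  hence "N' = N" using Q by (simp add: power_inject_exp)
  thus ?thesis using N' by simp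
qed


context ffq begin

lemma D_add: "D j (x + y) = D j x + D j y" by (simp add: D_def frob_add)

lemma D_smult: "c \<in> Fix 1 \<Longrightarrow> D j (c * x) = c * D j x"
  using Fix_dvd[of 1 j c] by (simp add: D_def power_mult_distrib Fix_iff algebra_simps)

lemma card_Ker:
  assumes d: "d > 0" and s: "s > 0"
  shows "card {x. D s (D d x) = 0} = q ^ (gcd d n) * card {x \<in> Fix (gcd s n). T (gcd d n) x = 0}"
proof -
  define Ker where "Ker = {x. D s (D d x) = 0}"
  have "card Ker = card {x\<in>Ker. D d x = 0} * card (D d ` Ker)"
    by (rule card_hom) (auto simp: Ker_def D_diff D_add)
  moreover have "{x\<in>Ker. D d x = 0} = Fix d" using q2 by (auto simp: Ker_def D_def Fix_iff)
  moreover have "D d ` Ker = {x \<in> Fix (gcd s n). T (gcd d n) x = 0}"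
  proof
    show "D d ` Ker \<subseteq> {x \<in> Fix (gcd s n). T (gcd d n) x = 0}"
    proof
      fix y assume "y \<in> D d ` Ker"
      then obtain x where x: "D s (D d x) = 0" "y = D d x" by (auto simp: Ker_def)
      have "y \<in> Fix s" using x by (simp add: D_def Fix_iff)
      hence "y \<in> Fix (gcd s n)" using Fix_gcd_n by auto
      moreover have "y \<in> range (D d)" using x by auto
      ultimately show "y \<in> {x \<in> Fix (gcd s n). T (gcd d n) x = 0}" using range_D[OF d] by auto
    qed
  next
    show "{x \<in> Fix (gcd s n). T (gcd d n) x = 0} \<subseteq> D d ` Ker"
    proof
      fix y assume y: "y \<in> {x \<in> Fix (gcd s n). T (gcd d n) x = 0}"
      hence "y \<in> range (D d)" using range_D[OF d] by auto
      then obtain x where x: "y = D d x" by auto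
      have "y \<in> Fix s" using y Fix_gcd_n by auto
      hence "D s (D d x) = 0" using x by (simp add: D_def Fix_iff)
      thus "y \<in> D d ` Ker" using x by (auto simp: Ker_def)
    qed
  qed
  ultimately show ?thesis using card_Fix by (simp add: Ker_def)
qed

end

theorem mainTheorem5:
  fixes p k q n a b :: nat
  assumes "prime p" and "odd p" and "k \<ge> 1" and "q = p ^ k"
    and "card (UNIV :: 'F set) = q ^ n"
    and "a > 0" and "b > 0" and "a \<noteq> b" and "n > 0"
  shows "ring.dimension (ring_of_type_algebra :: 'F::{finite,field} ring)
           (if multiplicity p n \<le> max (multiplicity p (b + a)) (multiplicity p (if a \<le> b then b - a else a - b))
            then gcd (b + a) n + gcd (if a \<le> b then b - a else a - b) n
                 - gcd (gcd (b + a) (if a \<le> b then b - a else a - b)) n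
            else gcd (b + a) n + gcd (if a \<le> b then b - a else a - b) n)
           (subfield_Fq q)
           (qf_radical (\<lambda>x::'F. trace_Fq q n (x ^ (q ^ b + 1) - x ^ (q ^ a + 1))))"
proof -
  interpret ffq p k q n "TYPE('F)" by unfold_locales (use assms in auto)
  define d where "d = (if a \<le> b then b - a else a - b)"
  define s where "s = b + a"
  have d0: "d > 0" using assms by (auto simp: d_def)
  have s0: "s > 0" using assms by (auto simp: s_def)
  define E where "E = qf_radical (\<lambda>x::'F. trace_Fq q n (x ^ (q ^ b + 1) - x ^ (q ^ a + 1)))"
  have rad: "E = {x. D s (D d x) = 0}"
  proof -
    have "E = {x. L a b x = 0}" unfolding E_def by (rule radical_L) (use assms in auto)
    also have "\<dots> = {x. D s (D d x) = 0}"
    proof (cases "a < b")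
      case True thus ?thesis using L_D[of a b] assms by (auto simp: d_def s_def)
    next
      case False
      hence "b < a" using assms by auto
      thus ?thesis using L_D[of b a] L_swap[of a b] assms False by (auto simp: d_def s_def add.commute)
    qed
    finally show ?thesis .
  qed
  define g where "g = gcd d n"
  define h where "h = gcd s n"
  have g: "g dvd n" "g > 0" and h: "h dvd n" "h > 0" using assms by (auto simp: g_def h_def)
  have e: "gcd g h = gcd (gcd s d) n"
    by (simp add: g_def h_def gcd.assoc gcd.commute gcd.left_commute)
  have eh: "gcd g h \<le> h" using h by (simp add: gcd_le2_nat)
  have hg: "gcd s n + gcd d n = gcd d n + gcd s n" by simp
  define N where "N = (if multiplicity p n \<le> max (multiplicity p s) (multiplicity p d)
            then h + g - gcd (gcd s d) n else h + g)"
  have cardE: "card E = q ^ N"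
  proof -
    have "card E = q ^ g * card {x \<in> Fix h. T g x = 0}"
      unfolding rad g_def h_def by (rule card_Ker[OF d0 s0])
    also have "\<dots> = q ^ g * (if p dvd (n div lcm g h) then q ^ h else q ^ (h - gcd g h))"
      using card_W[OF g h] by simp
    also have "\<dots> = q ^ N"
    proof (cases "multiplicity p n \<le> max (multiplicity p s) (multiplicity p d)")
      case True
      hence "\<not> p dvd (n div lcm g h)" using nt_main[OF assms(1,9) d0 s0] by (simp add: g_def h_def)
      moreover have "N = g + (h - gcd g h)" using True eh e by (simp add: N_def)
      ultimately show ?thesis by (simp add: power_add)
    next
      case False
      hence "p dvd (n div lcm g h)" using nt_main[OF assms(1,9) d0 s0] by (simp add: g_def h_def)
      moreover have "N = g + h" using False by (simp add: N_def)
      ultimately show ?thesis by (simp add: power_add)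
    qed
    finally show ?thesis .
  qed
  have K: "subfield_Fq q = Fix 1" by (auto simp: subfield_Fq_def Fix_iff)
  have cK: "card (Fix 1) = q" using card_Fix[of 1] by simp
  have "ring.dimension (ring_of_type_algebra :: 'F ring) N (Fix 1) E"
  proof (rule dim_card[OF _ _ _ _ _ cK q2])
    show "(0::'F) \<in> Fix 1" using q2 by (simp add: Fix_iff)
    show "(1::'F) \<in> Fix 1" by (simp add: Fix_iff)
    show "c - c' \<in> Fix 1" if "c \<in> Fix 1" "c' \<in> Fix 1" for c c' using that frob_diff[of c c' 1] by (simp add: Fix_iff)
    show "inverse c \<in> Fix 1" if "c \<in> Fix 1" for c using that by (simp add: Fix_iff power_inverse)
    show "c * c' \<in> Fix 1" if "c \<in> Fix 1" "c' \<in> Fix 1" for c c' using that by (simp add: Fix_iff power_mult_distrib)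
    show "(0::'F) \<in> E" by (simp add: rad)
    show "x + y \<in> E" if "x \<in> E" "y \<in> E" for x y using that by (simp add: rad D_add)
    show "c * x \<in> E" if "c \<in> Fix 1" "x \<in> E" for c x using that by (simp add: rad D_smult)
    show "card E = q ^ N" by (rule cardE)
  qed
  thus ?thesis unfolding K by (simp only: E_def N_def d_def s_def g_def h_def)
qed


end
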